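(* There exists a list $I=(x_1,\ldots,x_n)$ of items with all sizes $x_i\in(1/3,1]$ such that $$\mathbb{E}[\mathrm{BF}(I^\sigma)] > \frac{6}{5}\,\mathrm{OPT}(I),$$ where $\sigma$ is drawn uniformly at random from the set $\mathcal{S}_n$ of permutations of $[n]$.
   Context: Bin packing: given a list $I=(x_1,\ldots,x_n)$ of items with sizes in $(0,1]$, a packing assigns items to unit-capacity bins so that the total size of items in each bin is at most $1$. $\mathrm{OPT}(I)$ denotes the minimum number of bins in a feasible packing. The online algorithm Best Fit (BF) processes the items in the given order and packs the current item into the fullest bin (largest current load) into which it fits, opening a new bin if it fits into no existing bin; items are never moved. $\mathrm{BF}(I)$ denotes the number of bins Best Fit uses on list $I$. For $\sigma\in\mathcal{S}_n$, $I^\sigma=(x_{\sigma(1)},\ldots,x_{\sigma(n)})$. *)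

theory Defs
  imports "HOL-Analysis.Analysis" "HOL-Combinatorics.Permutations"
begin

text \<open>The state is the list of current bin loads (in order of opening).
  An item x is put into a bin of largest load among those bins into which it fits
  (load + x \<le> 1); ties are broken by smallest index (this does not affect the
  number of bins used).\<close>

definition bf_fits :: "real list \<Rightarrow> real \<Rightarrow> nat set" where
  "bf_fits L x = {i. i < length L \<and> L ! i + x \<le> 1}"

definition bf_step :: "real list \<Rightarrow> real \<Rightarrow> real list" where
  "bf_step L x =
     (if bf_fits L x = {} then L @ [x]
      else (let m = Max ((\<lambda>i. L ! i) ` bf_fits L x);
                j = LEAST i. i \<in> bf_fits L x \<and> L ! i = m
            in L[j := L ! j + x]))"

definition bf_loads :: "real list \<Rightarrow> real list" where
  "bf_loads xs = foldl bf_step [] xs"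

definition BF :: "real list \<Rightarrow> nat" where
  "BF xs = length (bf_loads xs)"

definition feasible_packing :: "real list \<Rightarrow> nat \<Rightarrow> (nat \<Rightarrow> nat) \<Rightarrow> bool" where
  "feasible_packing xs k f \<longleftrightarrow>
     (\<forall>i<length xs. f i < k) \<and>
     (\<forall>b<k. (\<Sum>i\<in>{i. i < length xs \<and> f i = b}. xs ! i) \<le> 1)"

definition OPT :: "real list \<Rightarrow> nat" where
  "OPT xs = (LEAST k. \<exists>f. feasible_packing xs k f)"

definition permute_list_by :: "(nat \<Rightarrow> nat) \<Rightarrow> real list \<Rightarrow> real list" where
  "permute_list_by \<sigma> xs = map (\<lambda>i. xs ! \<sigma> i) [0..<length xs]"

definition expected_BF_random_order :: "real list \<Rightarrow> real" where
  "expected_BF_random_order xs =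
     (\<Sum>\<sigma>\<in>{\<sigma>. \<sigma> permutes {..<length xs}}. real (BF (permute_list_by \<sigma> xs)))
       / fact (length xs)"

end

theory Submission
  imports Defs "HOL-Combinatorics.Multiset_Permutations"
begin

definition bfi :: "int list \<Rightarrow> int \<Rightarrow> int list" where
 "bfi L x = (let F = filter (\<lambda>i. L!i + x \<le> 100) [0..<length L] in
    if F = [] then L @ [x] else
    (let m = Max (set (map ((!) L) F)); j = hd (filter (\<lambda>i. L!i = m) F) in L[j := L!j + x]))"

definition xi :: "int list" where "xi = [34, 35, 36, 66, 65, 64]"

lemma comp: "sum_list (map (\<lambda>ys. length (foldl bfi [] (map ((!) xi) ys))) (permutations_of_set_list [0..<6])) = 2600"
  unfolding xi_def by code_simp

lemma least_filter: "filter P [0..<n] \<noteq> [] \<Longrightarrow> (LEAST i. i < n \<and> P i) = hd (filter P [0..<n])"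
proof (induction n)
  case 0 then show ?case by simp
next
  case (Suc n)
  show ?case
  proof (cases "filter P [0..<n] = []")
    case True
    then have np: "\<forall>i<n. \<not> P i" by (simp add: filter_empty_conv)
    have "P n" using Suc.prems True by (auto split: if_splits)
    have "(LEAST i. i < Suc n \<and> P i) = n"
      using np \<open>P n\<close> by (intro Least_equality) (simp_all, metis not_le)
    then show ?thesis using True \<open>P n\<close> by simp
  next
    case False
    then obtain i where i: "i < n" "P i" by (auto simp: filter_empty_conv)
    have "(LEAST i. i < Suc n \<and> P i) = (LEAST i. i < n \<and> P i)"
    proof -
      have L: "(LEAST k. k < n \<and> P k) < n \<and> P (LEAST k. k < n \<and> P k)"
        using LeastI[of "\<lambda>k. k < n \<and> P k" i] i by simp
      show ?thesis
      proof (rule Least_equality)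
        show "(LEAST k. k < n \<and> P k) < Suc n \<and> P (LEAST k. k < n \<and> P k)" using L by simp
      next
        fix y assume y: "y < Suc n \<and> P y"
        show "(LEAST k. k < n \<and> P k) \<le> y"
        proof (cases "y < n")
          case True then show ?thesis using y by (intro Least_le) simp
        next
          case False then show ?thesis using L y by simp
        qed
      qed
    qed
    then show ?thesis using Suc.IH[OF False] False by simp
  qed
qed

definition fr :: "int \<Rightarrow> real" where "fr k = real_of_int k / 100"

lemma fr_le: "fr a + fr b \<le> 1 \<longleftrightarrow> a + b \<le> 100"
proof -
  have "real_of_int a + real_of_int b \<le> 100 \<longleftrightarrow> a + b \<le> 100"
    by (metis of_int_add of_int_le_iff of_int_numeral)
  then show ?thesis unfolding fr_def by (simp add: add_divide_distrib[symmetric] divide_le_eq)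
qed
lemma fr_eq: "fr a = fr b \<longleftrightarrow> a = b" unfolding fr_def by simp
lemma fr_add: "fr (a + b) = fr a + fr b" unfolding fr_def by (simp add: add_divide_distrib)
lemma fr_mono: "mono fr" unfolding fr_def mono_def by (simp add: divide_right_mono)

lemma p_fits: "bf_fits (map fr L) (fr x) = set (filter (\<lambda>i. L!i + x \<le> 100) [0..<length L])"
    unfolding bf_fits_def by (auto simp: fr_le)

lemma p_true: "filter (\<lambda>i. L!i + x \<le> 100) [0..<length L] = [] \<Longrightarrow> bf_step (map fr L) (fr x) = map fr (bfi L x)"
  using p_fits[of L x] unfolding bf_step_def bfi_def Let_def by simp

lemma p_img: "set F \<subseteq> {..<length L} \<Longrightarrow> (\<lambda>i. map fr L ! i) ` set F = fr ` set (map ((!) L) F)"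
  by (force simp: image_iff)

lemma p_fne: "m \<in> set (map ((!) L) (filter (\<lambda>i. L!i + x \<le> 100) [0..<length L])) \<Longrightarrow> filter (\<lambda>i. (L!i + x \<le> 100) \<and> L!i = m) [0..<length L] \<noteq> []"
  by (auto simp: filter_empty_conv)

lemma p_least: "(LEAST i. i \<in> set (filter (\<lambda>i. L!i + x \<le> 100) [0..<length L]) \<and> map fr L ! i = fr m)
           = (LEAST i. i < length L \<and> ((L!i + x \<le> 100) \<and> L!i = m))"
  by (rule arg_cong[where f=Least]) (auto simp: fr_eq)


lemma step_transfer: "bf_step (map fr L) (fr x) = map fr (bfi L x)"
proof (cases "filter (\<lambda>i. L!i + x \<le> 100) [0..<length L] = []")
  case True then show ?thesis by (rule p_true)
next
  case False
  define F where "F = filter (\<lambda>i. L!i + x \<le> 100) [0..<length L]"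
  have fits: "bf_fits (map fr L) (fr x) = set F" unfolding F_def by (rule p_fits)
  have FF: "F \<noteq> []" using False unfolding F_def .
  define m where "m = Max (set (map ((!) L) F))"
  define j where "j = hd (filter (\<lambda>i. L!i = m) F)"
  have Fsub: "set F \<subseteq> {..<length L}" unfolding F_def by auto
  have fin: "finite (set (map ((!) L) F))" by simp
  have nem: "set (map ((!) L) F) \<noteq> {}" using FF by simp
  have M: "Max ((\<lambda>i. map fr L ! i) ` bf_fits (map fr L) (fr x)) = fr m"
    unfolding fits p_img[OF Fsub] m_def
    using mono_Max_commute[OF fr_mono fin nem] by (rule sym)
  have mex: "m \<in> set (map ((!) L) F)" unfolding m_def using fin nem by (rule Max_in)
  have fne: "filter (\<lambda>i. (L!i + x \<le> 100) \<and> L!i = m) [0..<length L] \<noteq> []"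
    using mex unfolding F_def by (rule p_fne)
  have J: "(LEAST i. i \<in> bf_fits (map fr L) (fr x) \<and> map fr L ! i = fr m) = j"
  proof -
    have "(LEAST i. i \<in> bf_fits (map fr L) (fr x) \<and> map fr L ! i = fr m)
         = (LEAST i. i < length L \<and> ((L!i + x \<le> 100) \<and> L!i = m))"
      unfolding fits F_def by (rule p_least)
    also have "\<dots> = hd (filter (\<lambda>i. (L!i + x \<le> 100) \<and> L!i = m) [0..<length L])"
      by (rule least_filter[OF fne])
    also have "\<dots> = j" unfolding j_def F_def filter_filter ..
    finally show ?thesis .
  qed
  have fne2: "filter (\<lambda>i. L!i = m) F \<noteq> []" using fne unfolding F_def filter_filter .
  have jin: "j \<in> set F" unfolding j_def by (rule subsetD[OF filter_is_subset hd_in_set[OF fne2]])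
  hence jl: "j < length L" using Fsub by auto
  have ne: "bf_fits (map fr L) (fr x) \<noteq> {}" using fits FF by simp
  have b1: "bf_step (map fr L) (fr x) = (map fr L)[j := map fr L ! j + fr x]"
    unfolding bf_step_def Let_def M J using ne by (simp only: if_False)
  have b2: "bfi L x = L[j := L!j + x]"
    unfolding bfi_def Let_def F_def[symmetric] m_def[symmetric] j_def[symmetric] using FF by (simp only: if_False)
  show ?thesis unfolding b1 b2 map_update using jl by (simp add: fr_add)
qed


lemma foldl_transfer: "foldl bf_step (map fr A) (map fr ys) = map fr (foldl bfi A ys)"
  by (induction ys arbitrary: A) (simp_all add: step_transfer)

lemma BF_transfer: "BF (map fr ys) = length (foldl bfi [] ys)"
  unfolding BF_def bf_loads_def using foldl_transfer[of "[]" ys] by simp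

lemma sum_perm:
  "(\<Sum>\<sigma>\<in>{\<sigma>. \<sigma> permutes {..<n}}. g (map \<sigma> [0..<n])) = (\<Sum>ys\<in>permutations_of_set {..<n}. g ys)"
proof (rule sum.reindex_bij_betw)
  show "bij_betw (\<lambda>\<sigma>. map \<sigma> [0..<n]) {\<sigma>. \<sigma> permutes {..<n}} (permutations_of_set {..<n})"
  proof (rule bij_betw_imageI)
    show "inj_on (\<lambda>\<sigma>. map \<sigma> [0..<n]) {\<sigma>. \<sigma> permutes {..<n}}"
    proof (rule inj_onI)
      fix \<sigma> \<tau> assume s: "\<sigma> \<in> {\<sigma>. \<sigma> permutes {..<n}}" and t: "\<tau> \<in> {\<sigma>. \<sigma> permutes {..<n}}"
        and e: "map \<sigma> [0..<n] = map \<tau> [0..<n]"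
      show "\<sigma> = \<tau>"
      proof
        fix i show "\<sigma> i = \<tau> i"
        proof (cases "i < n")
          case True then show ?thesis using arg_cong[OF e, of "\<lambda>l. l ! i"] by simp
        next
          case False then show ?thesis using s t by (simp add: permutes_not_in)
        qed
      qed
    qed
    show "(\<lambda>\<sigma>. map \<sigma> [0..<n]) ` {\<sigma>. \<sigma> permutes {..<n}} = permutations_of_set {..<n}"
    proof
      show "(\<lambda>\<sigma>. map \<sigma> [0..<n]) ` {\<sigma>. \<sigma> permutes {..<n}} \<subseteq> permutations_of_set {..<n}"
      proof clarify
        fix \<sigma> assume p: "\<sigma> permutes {..<n}"
        have "set (map \<sigma> [0..<n]) = {..<n}" using permutes_image[OF p] by (simp add: lessThan_atLeast0)
        moreover have "distinct (map \<sigma> [0..<n])"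
          using permutes_inj_on[OF p] by (simp add: distinct_map inj_on_subset)
        ultimately show "map \<sigma> [0..<n] \<in> permutations_of_set {..<n}" by blast
      qed
      show "permutations_of_set {..<n} \<subseteq> (\<lambda>\<sigma>. map \<sigma> [0..<n]) ` {\<sigma>. \<sigma> permutes {..<n}}"
      proof
        fix ys assume y: "ys \<in> permutations_of_set {..<n}"
        have sy: "set ys = {..<n}" and dy: "distinct ys" using permutations_of_setD[OF y] by auto
        have ly: "length ys = n" using distinct_card[OF dy] sy by simp
        define \<sigma> where "\<sigma> = (\<lambda>i. if i < n then ys ! i else i)"
        have "bij_betw ((!) ys) {..<n} {..<n}" using bij_betw_nth[OF dy] ly sy by simp
        then have "bij_betw \<sigma> {..<n} {..<n}" by (rule bij_betw_cong[THEN iffD1, rotated]) (simp add: \<sigma>_def)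
        then have "\<sigma> permutes {..<n}" by (rule bij_imp_permutes) (simp add: \<sigma>_def)
        moreover have "map \<sigma> [0..<n] = ys" using ly by (intro nth_equalityI) (simp_all add: \<sigma>_def)
        ultimately show "ys \<in> (\<lambda>\<sigma>. map \<sigma> [0..<n]) ` {\<sigma>. \<sigma> permutes {..<n}}" by blast
      qed
    qed
  qed
qed

definition xs1 :: "real list" where "xs1 = [34/100, 35/100, 36/100, 66/100, 65/100, 64/100]"

lemma xs1_fr: "xs1 = map fr xi" unfolding xs1_def xi_def fr_def by simp

lemma OPT_xs1: "OPT xs1 = 3"
  unfolding OPT_def
proof (rule Least_equality)
  show "\<exists>f. feasible_packing xs1 3 f"
  proof
    have s: "{i. i < 6 \<and> i mod 3 = b} = {b, b+3}" if "b < 3" for b :: nat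
      using that by (auto; presburger)
    show "feasible_packing xs1 3 (\<lambda>i. i mod 3)"
      unfolding feasible_packing_def
    proof safe
      fix b :: nat assume b: "b < 3"
      have l6: "length xs1 = 6" by (simp add: xs1_def)
      have "(\<Sum>i\<in>{i. i < length xs1 \<and> i mod 3 = b}. xs1 ! i) = xs1 ! b + xs1 ! (b+3)"
        unfolding l6 s[OF b] by simp
      moreover have "b = 0 \<or> b = 1 \<or> b = 2" using b by auto
      ultimately show "(\<Sum>i\<in>{i. i < length xs1 \<and> i mod 3 = b}. xs1 ! i) \<le> 1"
        by (auto simp: xs1_def)
    qed auto
  qed
next
  fix k assume "\<exists>f. feasible_packing xs1 k f"
  then obtain f where f: "feasible_packing xs1 k f" by blast
  have "(\<Sum>b\<in>{..<k}. \<Sum>i\<in>{i. i \<in> {..<length xs1} \<and> f i = b}. xs1 ! i) = (\<Sum>i\<in>{..<length xs1}. xs1 ! i)"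
    by (rule sum.group) (use f in \<open>auto simp: feasible_packing_def\<close>)
  also have "\<dots> = 3" by (simp add: xs1_def lessThan_nat_numeral)
  finally have "3 = (\<Sum>b\<in>{..<k}. \<Sum>i\<in>{i. i < length xs1 \<and> f i = b}. xs1 ! i)" by simp
  also have "\<dots> \<le> (\<Sum>b\<in>{..<k}. 1)"
    by (rule sum_mono) (use f in \<open>auto simp: feasible_packing_def\<close>)
  finally show "3 \<le> k" by simp
qed

theorem proposition3:
  shows "\<exists>xs :: real list.
           (\<forall>x\<in>set xs. 1/3 < x \<and> x \<le> 1) \<and>
           expected_BF_random_order xs > 6/5 * real (OPT xs)"
proof (intro exI conjI)
  show "\<forall>x\<in>set xs1. 1/3 < x \<and> x \<le> 1" by (simp add: xs1_def)
  have len: "length xs1 = 6" by (simp add: xs1_def)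
  have pl: "permute_list_by \<sigma> xs1 = map ((!) xs1) (map \<sigma> [0..<6])" for \<sigma>
    by (simp add: permute_list_by_def len)
  have "(\<Sum>\<sigma>\<in>{\<sigma>. \<sigma> permutes {..<length xs1}}. real (BF (permute_list_by \<sigma> xs1)))
      = (\<Sum>ys\<in>permutations_of_set {..<6}. real (BF (map ((!) xs1) ys)))"
    unfolding len pl by (rule sum_perm)
  also have "\<dots> = (\<Sum>ys\<in>permutations_of_set {..<6}. real (length (foldl bfi [] (map ((!) xi) ys))))"
  proof (rule sum.cong)
    fix ys assume y: "ys \<in> permutations_of_set {..<6::nat}"
    have "set ys = {..<6}" using permutations_of_setD[OF y] by auto
    then have "\<forall>y\<in>set ys. y < length xi" by (simp add: xi_def)
    then have "map ((!) xs1) ys = map fr (map ((!) xi) ys)"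
      unfolding xs1_fr by simp
    then show "real (BF (map ((!) xs1) ys)) = real (length (foldl bfi [] (map ((!) xi) ys)))"
      using BF_transfer[of "map ((!) xi) ys"] by (simp only:)
  qed simp
  also have "\<dots> = real (\<Sum>ys\<in>permutations_of_set {..<6}. length (foldl bfi [] (map ((!) xi) ys)))"
    by (rule of_nat_sum[symmetric])
  also have "\<dots> = 2600"
  proof -
    have u: "{..<6::nat} = set [0..<6]" by (simp only: set_upt lessThan_atLeast0)
    have r: "remdups [0..<6::nat] = [0..<6]" by (simp only: remdups_id_iff_distinct distinct_upt)
    have e: "permutations_of_set {..<6::nat} = set (permutations_of_set_list [0..<6])"
      unfolding u using permutations_of_list[of "[0..<6::nat]"] unfolding r .
    have d: "distinct (permutations_of_set_list [0..<6::nat])"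
      by (rule distinct_permutations_of_set_list) (simp only: distinct_upt)
    have N: "(\<Sum>ys\<in>permutations_of_set {..<6}. length (foldl bfi [] (map ((!) xi) ys))) = 2600"
      unfolding e
      using sum_list_distinct_conv_sum_set[OF d, of "\<lambda>ys. length (foldl bfi [] (map ((!) xi) ys))"] comp
      by (simp only:)
    show ?thesis by (simp only: N of_nat_numeral)
  qed
  finally have S: "(\<Sum>\<sigma>\<in>{\<sigma>. \<sigma> permutes {..<length xs1}}. real (BF (permute_list_by \<sigma> xs1))) = 2600" .
  show "expected_BF_random_order xs1 > 6/5 * real (OPT xs1)"
    unfolding expected_BF_random_order_def S unfolding OPT_xs1 len by (simp add: fact_numeral)
qed

end
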